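(* Let $u\in\mathbb R$ and let $f_\zeta(y)=\sum_{(x,m)\in\zeta}g_m(y-x)$ be a shot-noise field as below. Assume there is $M\subset\{m\in\mathbf M:\ell^d(g_m^{-1}((0,\infty)))>0\}$ with $\mu(M)>0$. Then there is $\rho>1$ such that for every $\beta\ge1$, $$\mathbf E\big(\ell^d(\{f_{\eta^\rho}>u\}\cap\tilde Q_\beta)\big)>0.$$
   Context: $(\mathbf M,\mathscr M,\mu)$ is a probability space, $\{g_m;m\in\mathbf M\}$ a family of measurable functions $\mathbb R^d\to\mathbb R$ (jointly measurable in $(m,x)$) not containing $g\equiv0$, with $\int_{\mathbf M}\int_{B(0,\tau)^c}|g_m(x)|dx\,\mu(dm)<\infty$ for some $\tau>0$. $\eta$ is a Poisson process on $\mathbb R^d\times\mathbf M$ with intensity $\ell^d\otimes\mu$ ($\ell^d$ Lebesgue measure). For a configuration $\zeta$ with $\sum_{(x,m)\in\zeta}|g_m(y-x)|<\infty$ for all $y$, $f_\zeta(y)=\sum_{(x,m)\in\zeta}g_m(y-x)$. $\tilde Q_a=[-a/2,a/2)^d$ and $\eta^\rho=\eta\cap(\tilde Q_\rho\times\mathbf M)$. *)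

theory Defs
  imports "HOL-Probability.Probability"
begin

definition cubeQ :: "real \<Rightarrow> (real ^ 'd) set" where
  "cubeQ a = {x. \<forall>i. - a / 2 \<le> x $ i \<and> x $ i < a / 2}"

definition pcount :: "'a set \<Rightarrow> 'a set \<Rightarrow> ennreal" where
  "pcount \<zeta> A = emeasure (count_space UNIV) (\<zeta> \<inter> A)"

definition poisson_process :: "'w measure \<Rightarrow> 'a measure \<Rightarrow> ('w \<Rightarrow> 'a set) \<Rightarrow> bool" where
  "poisson_process P Lam \<eta> \<longleftrightarrow>
     prob_space P \<and>
     (\<forall>\<omega>\<in>space P. \<eta> \<omega> \<subseteq> space Lam) \<and>
     (\<forall>A\<in>sets Lam. (\<lambda>\<omega>. pcount (\<eta> \<omega>) A) \<in> borel_measurable P) \<and>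
     (\<forall>A\<in>sets Lam. emeasure Lam A < \<infinity> \<longrightarrow>
        (\<forall>k::nat. measure P {\<omega>\<in>space P. pcount (\<eta> \<omega>) A = of_nat k}
            = exp (- measure Lam A) * measure Lam A ^ k / fact k)) \<and>
     (\<forall>A\<in>sets Lam. emeasure Lam A = \<infinity> \<longrightarrow>
        (AE \<omega> in P. pcount (\<eta> \<omega>) A = \<infinity>)) \<and>
     (\<forall>(I::nat set) A. finite I \<longrightarrow> A ` I \<subseteq> sets Lam \<longrightarrow> disjoint_family_on A I \<longrightarrow>
        prob_space.indep_vars P (\<lambda>_. borel) (\<lambda>i \<omega>. pcount (\<eta> \<omega>) (A i)) I)"

text \<open>Shot-noise field of a configuration (finite configurations; for the
  restricted process this is the a.s. case).\<close>
definition shot_noise :: "('m \<Rightarrow> real ^ 'd \<Rightarrow> real) \<Rightarrow> ((real ^ 'd) \<times> 'm) set \<Rightarrow> real ^ 'd \<Rightarrow> real" where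
  "shot_noise g \<zeta> y = (\<Sum>(x, m)\<in>\<zeta>. g m (y - x))"

end

theory Submission
  imports Defs
begin


definition hbox :: "real^'d \<Rightarrow> real \<Rightarrow> (real^'d) set" where
  "hbox a s = {x. \<forall>i. a$i \<le> x$i \<and> x$i < a$i + s}"

lemma hbox_borel[measurable]: "hbox a s \<in> sets borel"
proof -
  have "hbox a s = (\<Inter>i. {x. a$i \<le> x$i} \<inter> {x. x$i < a$i + s})"
    by (auto simp: hbox_def)
  also have "\<dots> \<in> sets borel"
    by (intro sets.finite_INT) (auto intro!: sets.Int borel_closed borel_open
         closed_Collect_le open_Collect_less continuous_intros)
  finally show ?thesis .
qed

lemma hbox_lborel[measurable]: "hbox a s \<in> sets lborel" by simp

lemma hbox_measure:
  fixes a :: "real^'d"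
  assumes "s \<ge> 0"
  shows "emeasure lborel (hbox a s) = ennreal (s ^ CARD('d))"
proof -
  let ?b = "a + (\<chi> i. s)"
  have sub1: "box a ?b \<subseteq> hbox a s" by (auto simp: hbox_def mem_box_cart less_imp_le)
  have sub2: "hbox a s \<subseteq> cbox a ?b" by (auto simp: hbox_def mem_box_cart less_imp_le)
  have e: "(\<Prod>b\<in>Basis. (?b - a) \<bullet> b) = s ^ CARD('d)"
  proof -
    have "\<And>b. b \<in> (Basis::(real^'d) set) \<Longrightarrow> (?b - a) \<bullet> b = s"
      by (auto simp: Basis_vec_def inner_axis)
    then have "(\<Prod>b\<in>Basis. (?b - a) \<bullet> b) = (\<Prod>b\<in>(Basis::(real^'d) set). s)"
      by (intro prod.cong) auto
    also have "\<dots> = s ^ CARD('d)" by simp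
    finally show ?thesis .
  qed
  have le: "\<forall>b\<in>(Basis::(real^'d) set). a \<bullet> b \<le> ?b \<bullet> b"
    using assms by (auto simp: Basis_vec_def inner_axis)
  have m1: "emeasure lborel (box a ?b) = ennreal (s ^ CARD('d))"
    using le e by (simp add: emeasure_lborel_box_eq)
  have m2: "emeasure lborel (cbox a ?b) = ennreal (s ^ CARD('d))"
    using le e by (simp add: emeasure_lborel_cbox_eq)
  have "emeasure lborel (box a ?b) \<le> emeasure lborel (hbox a s)"
    using sub1 by (intro emeasure_mono) auto
  moreover have "emeasure lborel (hbox a s) \<le> emeasure lborel (cbox a ?b)"
    using sub2 by (intro emeasure_mono) auto
  ultimately show ?thesis using m1 m2 by (metis antisym)
qed

lemma cubeQ_hbox: "cubeQ r = hbox (\<chi> i. - r / 2) r"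
  by (auto simp: cubeQ_def hbox_def)



definition qc :: "nat \<Rightarrow> ('d::finite \<Rightarrow> int) \<Rightarrow> (real^'d) set" where
  "qc n z = hbox (\<chi> i. real_of_int (z i) / 2^n) (1/2^n)"

lemma qc_borel[measurable]: "qc n z \<in> sets borel"
  by (simp add: qc_def)

lemma mem_qc: "x \<in> qc n z \<longleftrightarrow> (\<forall>i. z i = \<lfloor>2^n * x$i\<rfloor>)"
proof -
  have "\<And>i. (real_of_int (z i) / 2^n \<le> x$i \<and> x$i < real_of_int (z i) / 2^n + 1/2^n)
        \<longleftrightarrow> z i = \<lfloor>2^n * x$i\<rfloor>"
  proof -
    fix i
    have "(real_of_int (z i) / 2^n \<le> x$i \<and> x$i < real_of_int (z i) / 2^n + 1/2^n)
        \<longleftrightarrow> (real_of_int (z i) \<le> 2^n * x$i \<and> 2^n * x$i < real_of_int (z i) + 1)"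
      by (simp add: field_simps)
    also have "\<dots> \<longleftrightarrow> z i = \<lfloor>2^n * x$i\<rfloor>"
      by (simp add: floor_eq_iff eq_commute[of "z i"])
    finally show "?thesis i" .
  qed
  then show ?thesis by (simp add: qc_def hbox_def)
qed

lemma qc_disjoint: "disjoint_family_on (qc n) A"
  unfolding disjoint_family_on_def
proof (intro ballI impI)
  fix z z' assume "z \<in> A" "z' \<in> A" "z \<noteq> z'"
  then show "qc n z \<inter> qc n z' = {}"
    by (auto simp: mem_qc fun_eq_iff)
qed

lemma qc_measure: "emeasure lborel (qc n (z::'d::finite \<Rightarrow> int)) = ennreal ((1/2^n) ^ CARD('d))"
  unfolding qc_def by (rule hbox_measure) simp

lemma qc_small:
  fixes z :: "'d::finite \<Rightarrow> int"
  assumes "x \<in> qc n z" "y \<in> qc n z"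
  shows "dist y x < real CARD('d) / 2^n"
proof -
  have c: "\<bar>y$i - x$i\<bar> < 1/2^n" for i
  proof -
    have "z i = \<lfloor>2^n * x$i\<rfloor>" "z i = \<lfloor>2^n * y$i\<rfloor>" using assms by (auto simp: mem_qc)
    then have "\<bar>2^n * y$i - 2^n * x$i\<bar> < 1"
      by linarith
    then have "2^n * \<bar>y$i - x$i\<bar> < 1"
      by (simp add: abs_mult right_diff_distrib[symmetric])
    then show ?thesis by (simp add: field_simps)
  qed
  have "dist y x = norm (y - x)" by (simp add: dist_norm)
  also have "\<dots> \<le> (\<Sum>i\<in>(UNIV::'d set). \<bar>(y - x)$i\<bar>)" by (rule norm_le_l1_cart)
  also have "\<dots> < (\<Sum>i\<in>(UNIV::'d set). 1/2^n)"
    by (rule sum_strict_mono) (auto simp: c vector_minus_component)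
  also have "\<dots> = real CARD('d) / 2^n" by simp
  finally show ?thesis .
qed



lemma density_cube:
  fixes S :: "(real^'d) set" and \<theta> :: real
  assumes S: "S \<in> sets borel" and pos: "0 < emeasure lborel S" and th: "0 < \<theta>"
  shows "\<exists>n (z::'d \<Rightarrow> int). 1 \<le> n \<and>
           emeasure lborel (qc n z - S) \<le> ennreal \<theta> * emeasure lborel (qc n z)"
proof (rule ccontr)
  assume neg: "\<not> ?thesis"
  then have bad: "\<And>n (z::'d \<Rightarrow> int). 1 \<le> n \<Longrightarrow>
      ennreal \<theta> * emeasure lborel (qc n z) < emeasure lborel (qc n z - S)"
    by (metis not_le)
  obtain r0 where r0: "0 < r0" "ennreal r0 \<le> emeasure lborel S"
  proof -
    obtain y where y: "0 < y" "y < emeasure lborel S" using dense pos by blast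
    then have "y \<noteq> \<top>" using top.not_eq_extremum by fastforce
    then obtain r where "y = ennreal r" "r \<ge> 0" by (cases y) auto
    with y show ?thesis using that[of r] by (auto simp: less_imp_le)
  qed
  have "0 < \<theta> * r0 / 2" using th r0 by simp
  then obtain U where U: "open U" "S \<subseteq> U" "emeasure lborel (U - S) < ennreal (\<theta> * r0 / 2)"
    using outer_regular_lborel[OF S] by blast
  define Z where "Z n = {z::'d \<Rightarrow> int. qc n z \<subseteq> U}" for n
  define On where "On n = \<Union>(qc n ` Z n)" for n
  have cZ: "countable (Z n)" for n by simp
  have On_sets[measurable]: "On n \<in> sets lborel" for n
    unfolding On_def by (intro sets.countable_UN') (auto simp: cZ)
  have On_sub: "On n \<subseteq> U" for n by (auto simp: On_def Z_def)
  define W where "W N = (\<Inter>n\<in>{N..}. On n)" for N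
  have W_sets: "W N \<in> sets lborel" for N
    unfolding W_def using On_sets by (intro sets.countable_INT') auto
  have W_inc: "incseq W" by (auto simp: incseq_def W_def)
  have O_sub: "U \<subseteq> (\<Union>N. W N)"
  proof
    fix x assume "x \<in> U"
    then obtain r where r: "r > 0" "ball x r \<subseteq> U" using U(1) openE by blast
    have cp: "0 < real CARD('d)" by simp
    obtain N where N: "(1/2::real)^N < r / real CARD('d)"
      using real_arch_pow_inv[of "r / real CARD('d)" "1/2"] r cp by auto
    have "x \<in> W N"
      unfolding W_def
    proof (intro INT_I)
      fix n assume "n \<in> {N..}"
      then have nN: "N \<le> n" by simp
      define z where "z = (\<lambda>i. \<lfloor>2^n * x$i\<rfloor>)"
      have xz: "x \<in> qc n z" by (simp add: mem_qc z_def)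
      have p: "(2::real)^N \<le> 2^n" using nN by (intro power_increasing) auto
      have "real CARD('d) < r * 2^N"
        using N cp by (simp add: field_simps power_divide)
      also have "r * 2^N \<le> r * 2^n" using p r by (intro mult_left_mono) auto
      finally have "real CARD('d) / 2^n < r"
        by (simp add: field_simps)
      have "qc n z \<subseteq> ball x r"
      proof
        fix y assume "y \<in> qc n z"
        then have "dist y x < r" using qc_small[OF xz, of y] \<open>real CARD('d) / 2^n < r\<close> by simp
        then show "y \<in> ball x r" by (simp add: dist_commute)
      qed
      then have "z \<in> Z n" using r by (auto simp: Z_def)
      then show "x \<in> On n" using xz by (auto simp: On_def)
    qed
    then show "x \<in> (\<Union>N. W N)" by blast
  qed
  have "emeasure lborel S \<le> emeasure lborel U"
    using U by (intro emeasure_mono) auto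
  also have "\<dots> \<le> emeasure lborel (\<Union>N. W N)"
    using O_sub W_sets by (intro emeasure_mono) auto
  also have "\<dots> = (SUP N. emeasure lborel (W N))"
    using W_sets W_inc by (intro SUP_emeasure_incseq[symmetric]) auto
  finally have le1: "emeasure lborel S \<le> (SUP N. emeasure lborel (W N))" .
  have "ennreal (r0/2) < ennreal r0" using r0 by (intro ennreal_lessI) auto
  also have "\<dots> \<le> (SUP N. emeasure lborel (W N))" using r0(2) le1 by (rule order_trans)
  finally have "ennreal (r0/2) < (SUP N. emeasure lborel (W N))" .
  then obtain N where N: "ennreal (r0/2) < emeasure lborel (W N)"
    by (auto simp: less_SUP_iff)
  define n where "n = Suc N"
  have "W N \<subseteq> On n" by (auto simp: W_def n_def)
  then have WOn: "emeasure lborel (W N) \<le> emeasure lborel (On n)"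
    using On_sets[of n] by (intro emeasure_mono) auto
  have disj1: "disjoint_family_on (qc n) (Z n)" by (rule qc_disjoint)
  have disj2: "disjoint_family_on (\<lambda>z. qc n z - S) (Z n)"
    using disj1 unfolding disjoint_family_on_def by blast
  have eq1: "emeasure lborel (On n) = (\<integral>\<^sup>+z. emeasure lborel (qc n z) \<partial>count_space (Z n))"
    unfolding On_def by (rule emeasure_UN_countable) (auto simp: cZ disj1)
  have "On n - S = (\<Union>z\<in>Z n. qc n z - S)" by (auto simp: On_def)
  then have eq2: "emeasure lborel (On n - S) = (\<integral>\<^sup>+z. emeasure lborel (qc n z - S) \<partial>count_space (Z n))"
    using S by (simp only:) (rule emeasure_UN_countable, auto simp: cZ disj2)
  have "ennreal \<theta> * emeasure lborel (On n) = (\<integral>\<^sup>+z. ennreal \<theta> * emeasure lborel (qc n z) \<partial>count_space (Z n))"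
    unfolding eq1 by (rule nn_integral_cmult[symmetric]) auto
  also have "\<dots> \<le> (\<integral>\<^sup>+z. emeasure lborel (qc n z - S) \<partial>count_space (Z n))"
    using bad[of n] by (intro nn_integral_mono) (auto simp: n_def less_imp_le)
  also have "\<dots> = emeasure lborel (On n - S)" using eq2 by simp
  also have "\<dots> \<le> emeasure lborel (U - S)"
    using On_sub S U(1) by (intro emeasure_mono) auto
  also have "\<dots> < ennreal (\<theta> * r0 / 2)" by (rule U(3))
  also have "\<dots> = ennreal \<theta> * ennreal (r0/2)"
    using th r0 by (simp add: ennreal_mult[symmetric])
  also have "\<dots> \<le> ennreal \<theta> * emeasure lborel (On n)"
    using N WOn by (intro mult_left_mono) auto
  finally show False by simp
qed



lemma lborel_translate:
  fixes A :: "(real^'d) set" and x :: "real^'d"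
  assumes A: "A \<in> sets borel"
  shows "emeasure lborel {y. y - x \<in> A} = emeasure lborel A"
proof -
  have "emeasure lborel A = emeasure (distr lborel borel ((+) (- x))) A"
    by (simp add: lborel_distr_plus)
  also have "\<dots> = emeasure lborel ((+) (- x) -` A \<inter> space lborel)"
    using A by (intro emeasure_distr) auto
  also have "(+) (- x) -` A \<inter> space lborel = {y. y - x \<in> A}"
    by auto
  finally show ?thesis by simp
qed

lemma meas_est:
  fixes T :: "'a set" and B :: "'i \<Rightarrow> 'a set"
  assumes T: "T \<in> sets M" and F: "finite F" and B: "\<And>i. i \<in> F \<Longrightarrow> B i \<in> sets M"
    and Bb: "\<And>i. i \<in> F \<Longrightarrow> emeasure M (B i) \<le> ennreal b" and b: "b \<ge> 0"
    and Tt: "emeasure M T = ennreal t"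
  shows "ennreal (t - real (card F) * b) \<le> emeasure M (T - (\<Union>i\<in>F. B i))"
proof -
  let ?U = "\<Union>i\<in>F. B i"
  have U: "?U \<in> sets M" using F B by auto
  have "emeasure M T \<le> emeasure M ((T - ?U) \<union> ?U)"
    using T U by (intro emeasure_mono) auto
  also have "\<dots> \<le> emeasure M (T - ?U) + emeasure M ?U"
    using T U by (intro emeasure_subadditive) auto
  also have "emeasure M ?U \<le> (\<Sum>i\<in>F. emeasure M (B i))"
    using F B by (intro emeasure_subadditive_finite) auto
  also have "\<dots> \<le> (\<Sum>i\<in>F. ennreal b)" using Bb by (intro sum_mono) auto
  also have "\<dots> = ennreal (real (card F) * b)"
    using b by (simp add: ennreal_mult ennreal_of_nat_eq_real_of_nat)
  finally have le: "ennreal t \<le> emeasure M (T - ?U) + ennreal (real (card F) * b)"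
    using Tt by (simp add: add_left_mono)
  show ?thesis
  proof (cases "emeasure M (T - ?U)")
    case (real r)
    then have "ennreal t \<le> ennreal (r + real (card F) * b)"
      using le b by (simp add: ennreal_plus)
    then have "t \<le> r + real (card F) * b \<or> t \<le> 0"
      by (auto simp add: ennreal_le_iff2)
    moreover have "0 \<le> real (card F) * b" using b by simp
    ultimately show ?thesis using real
      by (auto intro!: ennreal_leI simp: ennreal_neg)
  qed simp
qed



lemma step1:
  fixes mu :: "'m measure" and g :: "'m \<Rightarrow> real ^ 'd \<Rightarrow> real" and M :: "'m set"
  assumes mu: "prob_space mu"
    and g_meas: "(\<lambda>(m, x). g m x) \<in> borel_measurable (mu \<Otimes>\<^sub>M lborel)"
    and M_sets: "M \<in> sets mu"
    and M_sub: "M \<subseteq> {m \<in> space mu. emeasure lborel {x. g m x > 0} > 0}"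
    and M_pos: "emeasure mu M > 0"
  shows "\<exists>\<delta>>0. \<exists>M'\<in>sets mu. M' \<subseteq> M \<and> emeasure mu M' > 0 \<and>
            (\<forall>m\<in>M'. emeasure lborel {x. \<delta> < g m x} > 0)"
proof -
  define G where "G = (\<lambda>p. g (fst p) (snd p))"
  have G[measurable]: "G \<in> borel_measurable (mu \<Otimes>\<^sub>M lborel)"
    using g_meas by (simp add: G_def case_prod_beta')
  define f where "f n m = emeasure lborel {x. 1 / real (Suc n) < g m x}" for n m
  have fm: "f n \<in> borel_measurable mu" for n
  proof -
    have Q: "{p \<in> space (mu \<Otimes>\<^sub>M lborel). 1 / real (Suc n) < G p} \<in> sets (mu \<Otimes>\<^sub>M lborel)"
      by measurable
    have "(\<lambda>m. emeasure lborel (Pair m -` {p \<in> space (mu \<Otimes>\<^sub>M lborel). 1 / real (Suc n) < G p}))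
          \<in> borel_measurable mu"
      by (rule lborel.measurable_emeasure_Pair[OF Q])
    then show ?thesis
      by (rule measurable_cong[THEN iffD1, rotated])
         (auto simp: f_def G_def space_pair_measure)
  qed
  define Mn where "Mn n = {m \<in> M. 0 < f n m}" for n
  have Mn_sets: "Mn n \<in> sets mu" for n
  proof -
    have "Mn n = M \<inter> {m \<in> space mu. 0 < f n m}"
      using M_sets sets.sets_into_space by (auto simp: Mn_def)
    also have "\<dots> \<in> sets mu"
    proof -
      have "{m \<in> space mu. 0 < f n m} \<in> sets mu" using fm[of n] by measurable
      then show ?thesis using M_sets by auto
    qed
    finally show ?thesis .
  qed
  have M_Un: "M \<subseteq> (\<Union>n. Mn n)"
  proof
    fix m assume m: "m \<in> M"
    then have msp: "m \<in> space mu" using M_sub by auto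
    have gm: "g m \<in> borel_measurable lborel"
      using measurable_Pair2[OF G msp] by (simp add: G_def)
    show "m \<in> (\<Union>n. Mn n)"
    proof (rule ccontr)
      assume "m \<notin> (\<Union>n. Mn n)"
      then have z: "f n m = 0" for n using m by (auto simp: Mn_def)
      have "{x. 0 < g m x} = (\<Union>n. {x. 1 / real (Suc n) < g m x})"
      proof safe
        fix x assume "0 < g m x"
        then obtain n where "inverse (real (Suc n)) < g m x"
          using reals_Archimedean by blast
        then have "1 / real (Suc n) < g m x" by (simp add: inverse_eq_divide)
        then show "x \<in> (\<Union>n. {x. 1 / real (Suc n) < g m x})" by blast
      next
        fix x n assume "1 / real (Suc n) < g m x"
        moreover have "0 < 1 / real (Suc n)" by simp
        ultimately show "0 < g m x" by linarith
      qed
      also have "emeasure lborel \<dots> = 0"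
        using z gm by (intro emeasure_UN_eq_0) (auto simp: f_def)
      finally show False using M_sub m by auto
    qed
  qed
  obtain n0 where n0: "0 < emeasure mu (Mn n0)"
  proof (rule ccontr)
    assume "\<not> thesis"
    then have "emeasure mu (Mn n) = 0" for n using that by (metis not_gr_zero)
    then have "emeasure mu (\<Union>n. Mn n) = 0"
      using Mn_sets by (intro emeasure_UN_eq_0) auto
    moreover have "(\<Union>n. Mn n) \<in> sets mu" using Mn_sets by auto
    ultimately have "emeasure mu M \<le> 0"
      using emeasure_mono[OF M_Un] by metis
    then have "emeasure mu M = 0" by simp
    then show False using M_pos by simp
  qed
  have "\<forall>m\<in>Mn n0. emeasure lborel {x. 1 / real (Suc n0) < g m x} > 0"
    by (auto simp: Mn_def f_def)
  moreover have "Mn n0 \<subseteq> M" by (auto simp: Mn_def)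
  moreover have "(0::real) < 1 / real (Suc n0)" by simp
  ultimately show ?thesis using n0 Mn_sets[of n0] by blast
qed

lemma step3:
  fixes mu :: "'m measure" and g :: "'m \<Rightarrow> real ^ 'd \<Rightarrow> real" and M' :: "'m set"
  assumes g_meas: "(\<lambda>(m, x). g m x) \<in> borel_measurable (mu \<Otimes>\<^sub>M lborel)"
    and M_sets: "M' \<in> sets mu" and M_pos: "emeasure mu M' > 0"
    and Mpos: "\<forall>m\<in>M'. emeasure lborel {x. \<delta> < g m x} > 0"
    and th: "0 < \<theta>"
  shows "\<exists>n (z::'d \<Rightarrow> int) C. 1 \<le> n \<and> C \<in> sets mu \<and> C \<subseteq> M' \<and> emeasure mu C > 0 \<and>
     (\<forall>m\<in>C. emeasure lborel (qc n z - {x. \<delta> < g m x}) \<le> ennreal \<theta> * emeasure lborel (qc n z))"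
proof -
  define G where "G = (\<lambda>p. g (fst p) (snd p))"
  have G[measurable]: "G \<in> borel_measurable (mu \<Otimes>\<^sub>M lborel)"
    using g_meas by (simp add: G_def case_prod_beta')
  have Msp: "M' \<subseteq> space mu" using M_sets sets.sets_into_space by auto
  have Sb: "{x. \<delta> < g m x} \<in> sets borel" if "m \<in> space mu" for m
  proof -
    have gm: "g m \<in> borel_measurable lborel"
      using measurable_Pair2[OF G that] by (simp add: G_def)
    then have "{x \<in> space lborel. \<delta> < g m x} \<in> sets lborel" by measurable
    then show ?thesis by simp
  qed
  define h where "h n z m = emeasure lborel (qc n z - {x. \<delta> < g m x})" for n and z :: "'d \<Rightarrow> int" and m
  have hm: "h n z \<in> borel_measurable mu" for n z
  proof -
    have Q: "{p \<in> space (mu \<Otimes>\<^sub>M lborel). snd p \<in> qc n z \<and> \<not> \<delta> < G p} \<in> sets (mu \<Otimes>\<^sub>M lborel)"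
      by measurable
    have "(\<lambda>m. emeasure lborel (Pair m -` {p \<in> space (mu \<Otimes>\<^sub>M lborel). snd p \<in> qc n z \<and> \<not> \<delta> < G p}))
          \<in> borel_measurable mu"
      by (rule lborel.measurable_emeasure_Pair[OF Q])
    then show ?thesis
      by (rule measurable_cong[THEN iffD1, rotated])
         (auto simp: h_def G_def space_pair_measure set_diff_eq)
  qed
  define Cq where "Cq nz = {m \<in> M'. h (fst nz) (snd nz) m \<le> ennreal \<theta> * emeasure lborel (qc (fst nz) (snd nz))}"
    for nz :: "nat \<times> ('d \<Rightarrow> int)"
  have Cq_sets: "Cq nz \<in> sets mu" for nz
  proof -
    have "{m \<in> space mu. h (fst nz) (snd nz) m \<le> ennreal \<theta> * emeasure lborel (qc (fst nz) (snd nz))} \<in> sets mu"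
      using hm[of "fst nz" "snd nz"] by measurable
    then show ?thesis using M_sets Msp unfolding Cq_def by (auto simp: Int_def)
  qed
  define I where "I = {nz :: nat \<times> ('d \<Rightarrow> int). 1 \<le> fst nz}"
  have cover: "M' \<subseteq> (\<Union>nz\<in>I. Cq nz)"
  proof
    fix m assume m: "m \<in> M'"
    then obtain n z where nz: "1 \<le> n" "emeasure lborel (qc n z - {x. \<delta> < g m x}) \<le> ennreal \<theta> * emeasure lborel (qc n (z::'d \<Rightarrow> int))"
      using density_cube[OF Sb[of m] _ th] Mpos Msp by blast
    then show "m \<in> (\<Union>nz\<in>I. Cq nz)"
      using m by (intro UN_I[of "(n, z)"]) (auto simp: I_def Cq_def h_def)
  qed
  obtain nz where nz: "nz \<in> I" "0 < emeasure mu (Cq nz)"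
  proof (rule ccontr)
    assume nt: "\<not> thesis"
    note ob = that
    have "Cq nz \<in> null_sets mu" if "nz \<in> I" for nz
      using that Cq_sets nt ob by (metis not_gr_zero null_setsI)
    then have "(\<Union>nz\<in>I. Cq nz) \<in> null_sets mu"
      by (intro null_sets_UN') auto
    then have "M' \<in> null_sets mu" using cover M_sets by (blast intro: null_sets_subset)
    then show False using M_pos by auto
  qed
  then show ?thesis
    using Cq_sets[of nz] by (intro exI[of _ "fst nz"] exI[of _ "snd nz"] exI[of _ "Cq nz"])
       (auto simp: I_def Cq_def h_def)
qed



lemma step4:
  fixes g :: "'m \<Rightarrow> real ^ 'd \<Rightarrow> real" and F :: "((real ^ 'd) \<times> 'm) set"
    and a p :: "real^'d"
  assumes gm: "\<And>x m. (x, m) \<in> F \<Longrightarrow> g m \<in> borel_measurable borel"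
    and F: "finite F" "card F = k" "1 \<le> k"
    and Fin: "\<And>x m. (x, m) \<in> F \<Longrightarrow> x \<in> hbox p w \<and>
                 emeasure lborel (hbox a s - {y. \<delta> < g m y}) \<le> ennreal b"
    and p: "p = (\<chi> i. - a$i - 1/2)" and w: "0 < w" "w \<le> s" and s: "s \<le> 1" and b: "b \<ge> 0"
    and ku: "u \<le> real k * \<delta>" and be: "1 \<le> \<beta>"
  shows "ennreal ((s - w) ^ CARD('d) - real k * b) \<le>
           emeasure lborel {y \<in> cubeQ \<beta>. u < shot_noise g F y}"
proof -
  define T0 where "T0 = hbox (\<chi> i::'d. - 1/2 + w) (s - w)"
  define B where "B = (\<lambda>(x, m). {y. y - x \<in> hbox a s - {z. \<delta> < g m z}})"
  have gsets: "hbox a s - {z. \<delta> < g m z} \<in> sets borel" if "(x, m) \<in> F" for x m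
  proof -
    have "{z \<in> space borel. \<delta> < g m z} \<in> sets borel" using gm[OF that] by measurable
    then show ?thesis by auto
  qed
  have Bsets: "B xm \<in> sets lborel" if "xm \<in> F" for xm
  proof -
    obtain x m where xm: "xm = (x, m)" by (cases xm)
    have "B xm = (\<lambda>y. y - x) -` (hbox a s - {z. \<delta> < g m z}) \<inter> space borel"
      by (auto simp: B_def xm)
    also have "\<dots> \<in> sets borel"
      using gsets[of x m] that xm by (intro measurable_sets[of _ borel borel]) auto
    finally show ?thesis by simp
  qed
  have Bb: "emeasure lborel (B xm) \<le> ennreal b" if "xm \<in> F" for xm
  proof -
    obtain x m where xm: "xm = (x, m)" by (cases xm)
    have eq: "B xm = {y. y - x \<in> hbox a s - {z. \<delta> < g m z}}" by (simp add: B_def xm)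
    have "emeasure lborel (B xm) = emeasure lborel (hbox a s - {z. \<delta> < g m z})"
      unfolding eq using gsets[of x m] that xm by (intro lborel_translate) auto
    also have "\<dots> \<le> ennreal b" using Fin[of x m] that xm by auto
    finally show ?thesis .
  qed
  have T0m: "emeasure lborel T0 = ennreal ((s - w) ^ CARD('d))"
    unfolding T0_def using w by (intro hbox_measure) auto
  have est: "ennreal ((s - w) ^ CARD('d) - real (card F) * b) \<le> emeasure lborel (T0 - (\<Union>xm\<in>F. B xm))"
    by (rule meas_est[OF _ F(1) Bsets Bb b T0m]) (auto simp: T0_def)
  have sn: "shot_noise g F \<in> borel_measurable borel"
  proof -
    have "(\<lambda>y. case xm of (x, m) \<Rightarrow> g m (y - x)) \<in> borel_measurable borel" if "xm \<in> F" for xm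
    proof -
      obtain x m where xm: "xm = (x, m)" by (cases xm)
      have "(\<lambda>y. g m (y - x)) \<in> borel_measurable borel"
        using gm[of x m] that xm by (intro measurable_compose[OF _ gm[of x m]]) auto
      then show ?thesis by (simp add: xm)
    qed
    then have "(\<lambda>y. \<Sum>xm\<in>F. case xm of (x, m) \<Rightarrow> g m (y - x)) \<in> borel_measurable borel"
      by (intro borel_measurable_sum) auto
    then show ?thesis
      by (simp add: shot_noise_def[abs_def] case_prod_beta')
  qed
  have Big: "{y \<in> cubeQ \<beta>. u < shot_noise g F y} \<in> sets lborel"
  proof -
    have "{y \<in> space borel. u < shot_noise g F y} \<in> sets borel" using sn by measurable
    moreover have "cubeQ \<beta> \<in> sets borel" by (simp add: cubeQ_hbox)
    ultimately have "cubeQ \<beta> \<inter> {y \<in> space borel. u < shot_noise g F y} \<in> sets borel" by auto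
    moreover have "cubeQ \<beta> \<inter> {y \<in> space borel. u < shot_noise g F y} = {y \<in> cubeQ \<beta>. u < shot_noise g F y}"
      by auto
    ultimately show ?thesis by simp
  qed
  have sub: "T0 - (\<Union>xm\<in>F. B xm) \<subseteq> {y \<in> cubeQ \<beta>. u < shot_noise g F y}"
  proof
    fix y assume y: "y \<in> T0 - (\<Union>xm\<in>F. B xm)"
    have yT: "- 1/2 + w \<le> y$i \<and> y$i < - 1/2 + w + (s - w)" for i
      using y by (auto simp: T0_def hbox_def)
    have inbox: "y - x \<in> hbox a s" if "x \<in> hbox p w" for x
    proof -
      have xi: "- a$i - 1/2 \<le> x$i \<and> x$i < - a$i - 1/2 + w" for i using that by (auto simp: hbox_def p)
      show ?thesis unfolding hbox_def
      proof (safe)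
        fix i
        show "a$i \<le> (y - x)$i" using xi[of i] yT[of i] by simp
        show "(y - x)$i < a$i + s" using xi[of i] yT[of i] by simp
      qed
    qed
    have pos: "\<delta> < g m (y - x)" if "(x, m) \<in> F" for x m
    proof -
      have "y - x \<in> hbox a s" using inbox Fin[OF that] by auto
      moreover have "y \<notin> B (x, m)" using y that by auto
      ultimately show ?thesis by (auto simp: B_def)
    qed
    have "u \<le> real k * \<delta>" by (rule ku)
    also have "\<dots> = (\<Sum>xm\<in>F. \<delta>)" using F by simp
    also have "\<dots> < (\<Sum>xm\<in>F. case xm of (x, m) \<Rightarrow> g m (y - x))"
    proof (rule sum_strict_mono)
      show "finite F" by (rule F(1))
      show "F \<noteq> {}" using F by auto
    qed (use pos in auto)
    also have "\<dots> = shot_noise g F y" by (simp add: shot_noise_def)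
    finally have "u < shot_noise g F y" .
    moreover have "y \<in> cubeQ \<beta>" unfolding cubeQ_def
    proof (safe)
      fix i
      show "- \<beta> / 2 \<le> y$i" using yT[of i] w s be by simp
      show "y$i < \<beta> / 2" using yT[of i] w s be by simp
    qed
    ultimately show "y \<in> {y \<in> cubeQ \<beta>. u < shot_noise g F y}" by simp
  qed
  have "ennreal ((s - w) ^ CARD('d) - real k * b) \<le> emeasure lborel (T0 - (\<Union>xm\<in>F. B xm))"
    using est F by simp
  also have "\<dots> \<le> emeasure lborel {y \<in> cubeQ \<beta>. u < shot_noise g F y}"
    using sub Big by (intro emeasure_mono) auto
  finally show ?thesis .
qed



theorem lemma4p1:
  fixes mu :: "'m measure" and g :: "'m \<Rightarrow> real ^ 'd \<Rightarrow> real"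
    and P :: "'w measure" and \<eta> :: "'w \<Rightarrow> ((real ^ 'd) \<times> 'm) set"
    and u :: real and M :: "'m set"
  assumes mu: "prob_space mu"
    and g_meas: "(\<lambda>(m, x). g m x) \<in> borel_measurable (mu \<Otimes>\<^sub>M lborel)"
    and g_nonzero: "\<forall>m\<in>space mu. g m \<noteq> (\<lambda>_. 0)"
    and g_int: "\<exists>\<tau>>0. (\<integral>\<^sup>+ m. (\<integral>\<^sup>+ x. ennreal \<bar>g m x\<bar> * indicator (- ball 0 \<tau>) x \<partial>lborel) \<partial>mu) < \<infinity>"
    and eta: "poisson_process P (lborel \<Otimes>\<^sub>M mu) \<eta>"
    and M_sets: "M \<in> sets mu"
    and M_sub: "M \<subseteq> {m \<in> space mu. emeasure lborel {x. g m x > 0} > 0}"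
    and M_pos: "emeasure mu M > 0"
  shows "\<exists>\<rho>>1. \<forall>\<beta>\<ge>1.
     (\<integral>\<^sup>+ \<omega>. emeasure lborel
         {y \<in> cubeQ \<beta>. shot_noise g (\<eta> \<omega> \<inter> (cubeQ \<rho> \<times> space mu)) y > u} \<partial>P) > 0"
proof -
  interpret mu: prob_space mu by (rule mu)
  let ?Lam = "(lborel :: (real^'d) measure) \<Otimes>\<^sub>M mu"
  have PP: "prob_space P"
    and meas: "\<forall>A\<in>sets ?Lam. (\<lambda>\<omega>. pcount (\<eta> \<omega>) A) \<in> borel_measurable P"
    and pois: "\<forall>A\<in>sets ?Lam. emeasure ?Lam A < \<infinity> \<longrightarrow>
        (\<forall>k::nat. measure P {\<omega>\<in>space P. pcount (\<eta> \<omega>) A = of_nat k}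
            = exp (- measure ?Lam A) * measure ?Lam A ^ k / fact k)"
    and indep: "\<forall>(I::nat set) A. finite I \<longrightarrow> A ` I \<subseteq> sets ?Lam \<longrightarrow> disjoint_family_on A I \<longrightarrow>
        prob_space.indep_vars P (\<lambda>_. borel) (\<lambda>i \<omega>. pcount (\<eta> \<omega>) (A i)) I"
    using eta unfolding poisson_process_def by auto
  interpret P: prob_space P by (rule PP)
  have gsec: "g m \<in> borel_measurable borel" if "m \<in> space mu" for m
  proof -
    have G: "(\<lambda>p. g (fst p) (snd p)) \<in> borel_measurable (mu \<Otimes>\<^sub>M lborel)"
      using g_meas by (simp add: case_prod_beta')
    show ?thesis using measurable_Pair2[OF G that] by simp
  qed
  obtain \<delta> M' where dl: "0 < \<delta>" and M'_sets: "M' \<in> sets mu" and M'M: "M' \<subseteq> M"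
    and M'_pos: "emeasure mu M' > 0" and M'S: "\<forall>m\<in>M'. emeasure lborel {x. \<delta> < g m x} > 0"
    using step1[OF mu g_meas M_sets M_sub M_pos] by blast
  define d where "d = CARD('d)"
  define k where "k = nat \<lceil>u / \<delta>\<rceil> + 1"
  have k1: "1 \<le> k" by (simp add: k_def)
  have ku: "u \<le> real k * \<delta>"
  proof -
    have "u / \<delta> \<le> real k" unfolding k_def by linarith
    then show ?thesis using dl by (simp add: field_simps)
  qed
  define \<theta> where "\<theta> = 1 / (real k * 2 ^ (d + 1))"
  have th: "0 < \<theta>" using k1 by (simp add: \<theta>_def)
  obtain n z C where n1: "1 \<le> n" and C_sets: "C \<in> sets mu" and CM: "C \<subseteq> M'"
    and C_pos: "emeasure mu C > 0"
    and Cd: "\<forall>m\<in>C. emeasure lborel (qc n z - {x. \<delta> < g m x}) \<le> ennreal \<theta> * emeasure lborel (qc n (z::'d \<Rightarrow> int))"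
    using step3[OF g_meas M'_sets M'_pos M'S th] by blast
  define s :: real where "s = 1 / 2^n"
  define a :: "real^'d" where "a = (\<chi> i. real_of_int (z i) / 2^n)"
  have qc_eq: "qc n z = hbox a s" by (simp add: qc_def a_def s_def)
  have s_pos: "0 < s" and s_le: "s \<le> 1/2"
  proof -
    show "0 < s" by (simp add: s_def)
    have "(2::real) ^ 1 \<le> 2 ^ n" using n1 by (intro power_increasing) auto
    then show "s \<le> 1/2" by (simp add: s_def field_simps)
  qed
  define w where "w = s / 2"
  define p :: "real^'d" where "p = (\<chi> i. - a$i - 1/2)"
  define \<rho> where "\<rho> = 2 * norm a + 2"
  define b where "b = \<theta> * s ^ d"
  have b0: "0 \<le> b" using th s_pos by (simp add: b_def)
  have Cb: "emeasure lborel (hbox a s - {y. \<delta> < g m y}) \<le> ennreal b" if "m \<in> C" for m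
  proof -
    have "emeasure lborel (hbox a s - {y. \<delta> < g m y}) \<le> ennreal \<theta> * ennreal (s ^ d)"
      using Cd that qc_measure[of n z] unfolding qc_eq by (simp add: s_def d_def)
    also have "\<dots> = ennreal b" using th s_pos by (simp add: b_def ennreal_mult)
    finally show ?thesis .
  qed
  define c where "c = (s - w) ^ d - real k * b"
  have c_pos: "0 < c"
  proof -
    have "real k * b = s ^ d / 2 ^ (d + 1)" using k1 by (simp add: b_def \<theta>_def)
    moreover have "(s - w) ^ d = s ^ d / 2 ^ d" by (simp add: w_def power_divide)
    ultimately have "c = s ^ d / 2 ^ (d + 1)" by (simp add: c_def field_simps)
    then show ?thesis using s_pos by simp
  qed
  define A1 where "A1 = hbox p w \<times> C"
  define A2 where "A2 = (cubeQ \<rho> \<times> space mu) - A1"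
  have C_space: "C \<subseteq> space mu" using C_sets sets.sets_into_space by auto
  have hbox_sub: "hbox p w \<subseteq> cubeQ \<rho>"
  proof
    fix x assume x: "x \<in> hbox p w"
    show "x \<in> cubeQ \<rho>" unfolding cubeQ_def
    proof safe
      fix i
      have ai: "\<bar>a$i\<bar> \<le> norm a" by (rule component_le_norm_cart)
      have "p$i \<le> x$i \<and> x$i < p$i + w" using x by (auto simp: hbox_def)
      then show "- \<rho> / 2 \<le> x$i" "x$i < \<rho> / 2"
        using ai s_le s_pos by (auto simp: p_def \<rho>_def w_def)
    qed
  qed
  have A1_sub: "A1 \<subseteq> cubeQ \<rho> \<times> space mu" using hbox_sub C_space by (auto simp: A1_def)
  have A1_sets: "A1 \<in> sets ?Lam" using C_sets by (simp add: A1_def)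
  have cube_sets: "cubeQ \<rho> \<times> space mu \<in> sets ?Lam" by (simp add: cubeQ_hbox)
  have A2_sets: "A2 \<in> sets ?Lam" unfolding A2_def by (rule sets.Diff[OF cube_sets A1_sets])
  have A1_meas: "emeasure ?Lam A1 = ennreal (w ^ CARD('d) * measure mu C)"
  proof -
    have "emeasure ?Lam A1 = emeasure lborel (hbox p w) * emeasure mu C"
      unfolding A1_def by (rule mu.emeasure_pair_measure_Times) (auto simp: C_sets)
    also have "\<dots> = ennreal (w ^ CARD('d)) * ennreal (measure mu C)"
      using s_pos by (simp add: hbox_measure w_def mu.emeasure_eq_measure)
    also have "\<dots> = ennreal (w ^ CARD('d) * measure mu C)"
      using s_pos by (simp add: ennreal_mult w_def)
    finally show ?thesis .
  qed
  have mC: "0 < measure mu C" using C_pos by (simp add: mu.emeasure_eq_measure)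
  define lam1 where "lam1 = measure ?Lam A1"
  have l1: "lam1 = w ^ CARD('d) * measure mu C"
    unfolding lam1_def measure_def A1_meas using s_pos mC by (simp add: w_def)
  have l1_pos: "0 < lam1" using l1 s_pos mC by (simp add: w_def)
  have cube_fin: "emeasure ?Lam (cubeQ \<rho> \<times> space mu) < \<infinity>"
  proof -
    have "\<rho> \<ge> 0" by (simp add: \<rho>_def)
    then have "emeasure ?Lam (cubeQ \<rho> \<times> space mu) = ennreal (\<rho> ^ CARD('d)) * emeasure mu (space mu)"
      by (simp add: mu.emeasure_pair_measure_Times cubeQ_hbox hbox_measure)
    then show ?thesis by (simp add: ennreal_mult_less_top mu.emeasure_space_1)
  qed
  have A1_fin: "emeasure ?Lam A1 < \<infinity>" using A1_meas by simp
  have A2_fin: "emeasure ?Lam A2 < \<infinity>"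
  proof -
    have "emeasure ?Lam A2 \<le> emeasure ?Lam (cubeQ \<rho> \<times> space mu)"
      using cube_sets by (intro emeasure_mono) (auto simp: A2_def)
    then show ?thesis using cube_fin by (simp add: le_less_trans)
  qed
  define E1 where "E1 = {\<omega>\<in>space P. pcount (\<eta> \<omega>) A1 = of_nat k}"
  define E2 where "E2 = {\<omega>\<in>space P. pcount (\<eta> \<omega>) A2 = of_nat 0}"
  have pE1: "P.prob E1 = exp (- lam1) * lam1 ^ k / fact k"
    using pois A1_sets A1_fin unfolding E1_def lam1_def by blast
  have pE2: "P.prob E2 = exp (- measure ?Lam A2) * measure ?Lam A2 ^ 0 / fact 0"
    using pois A2_sets A2_fin unfolding E2_def by blast
  have pE1_pos: "0 < P.prob E1" using pE1 l1_pos by simp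
  have pE2_pos: "0 < P.prob E2" using pE2 by simp
  have sing: "{x} \<in> sets (borel :: ennreal measure)" for x :: ennreal
    by (simp add: borel_closed)
  have E1_sets: "E1 \<in> sets P"
  proof -
    have "(\<lambda>\<omega>. pcount (\<eta> \<omega>) A1) -` {of_nat k} \<inter> space P \<in> sets P"
      using meas A1_sets sing by (intro measurable_sets) auto
    then show ?thesis by (simp add: E1_def Int_def vimage_def conj_commute)
  qed
  have E2_sets: "E2 \<in> sets P"
  proof -
    have "(\<lambda>\<omega>. pcount (\<eta> \<omega>) A2) -` {of_nat 0} \<inter> space P \<in> sets P"
      using meas A2_sets sing by (intro measurable_sets) auto
    then show ?thesis by (simp add: E2_def Int_def vimage_def conj_commute)
  qed
  define AA where "AA = (\<lambda>i::nat. if i = 0 then A1 else A2)"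
  have ind: "P.indep_vars (\<lambda>_. borel) (\<lambda>i \<omega>. pcount (\<eta> \<omega>) (AA i)) {0, 1}"
  proof -
    have "disjoint_family_on AA {0, 1}"
      by (auto simp: disjoint_family_on_def AA_def A2_def)
    moreover have "AA ` {0, 1} \<subseteq> sets ?Lam" using A1_sets A2_sets by (auto simp: AA_def)
    ultimately show ?thesis using indep by auto
  qed
  then have ind2: "P.indep_sets (\<lambda>i. {(\<lambda>\<omega>. pcount (\<eta> \<omega>) (AA i)) -` A \<inter> space P | A. A \<in> sets borel}) {0, 1}"
    unfolding P.indep_vars_def2 by blast
  define EE where "EE = (\<lambda>i::nat. if i = 0 then E1 else E2)"
  have "P.prob (\<Inter>j\<in>{0,1}. EE j) = (\<Prod>j\<in>{0,1}. P.prob (EE j))"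
  proof (rule P.indep_setsD[OF ind2])
    show "\<forall>j\<in>{0, 1}. EE j \<in> {(\<lambda>\<omega>. pcount (\<eta> \<omega>) (AA j)) -` A \<inter> space P | A. A \<in> sets borel}"
    proof
      fix j :: nat assume "j \<in> {0, 1}"
      then show "EE j \<in> {(\<lambda>\<omega>. pcount (\<eta> \<omega>) (AA j)) -` A \<inter> space P | A. A \<in> sets borel}"
      proof
        assume "j = 0"
        then show ?thesis using sing[of "of_nat k"]
          by (intro CollectI exI[of _ "{of_nat k}"]) (auto simp: EE_def AA_def E1_def)
      next
        assume "j \<in> {1}"
        then show ?thesis using sing[of "of_nat 0"]
          by (intro CollectI exI[of _ "{of_nat 0}"]) (auto simp: EE_def AA_def E2_def)
      qed
    qed
  qed auto
  then have pE: "P.prob (E1 \<inter> E2) = P.prob E1 * P.prob E2" by (simp add: EE_def Int_commute)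
  define E where "E = E1 \<inter> E2"
  have E_sets: "E \<in> sets P" using E1_sets E2_sets by (simp add: E_def)
  have E_pos: "0 < emeasure P E"
    using pE pE1_pos pE2_pos by (simp add: E_def P.emeasure_eq_measure)
  have pw: "ennreal c \<le> emeasure lborel {y \<in> cubeQ \<beta>. shot_noise g (\<eta> \<omega> \<inter> (cubeQ \<rho> \<times> space mu)) y > u}"
    if \<omega>: "\<omega> \<in> E" and be: "1 \<le> \<beta>" for \<omega> \<beta>
  proof -
    let ?F = "\<eta> \<omega> \<inter> (cubeQ \<rho> \<times> space mu)"
    have c2: "emeasure (count_space UNIV) (\<eta> \<omega> \<inter> A2) = 0"
      using \<omega> by (simp add: E_def E2_def pcount_def)
    then have e2: "\<eta> \<omega> \<inter> A2 = {}" by (simp add: emeasure_count_space_eq_0)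
    have F_eq: "?F = \<eta> \<omega> \<inter> A1" using e2 A1_sub by (auto simp: A2_def)
    have c1: "emeasure (count_space UNIV) (\<eta> \<omega> \<inter> A1) = of_nat k"
      using \<omega> by (simp add: E_def E1_def pcount_def)
    then have fin: "finite (\<eta> \<omega> \<inter> A1)" and card: "card (\<eta> \<omega> \<inter> A1) = k"
      by (auto simp: emeasure_count_space split: if_splits)
    show ?thesis
      unfolding F_eq c_def d_def
    proof (rule step4[where p = p and a = a and w = w and s = s and b = b and \<delta> = \<delta> and k = k])
      show "\<And>x m. (x, m) \<in> \<eta> \<omega> \<inter> A1 \<Longrightarrow> g m \<in> borel_measurable borel"
        using C_space by (intro gsec) (auto simp: A1_def)
      show "\<And>x m. (x, m) \<in> \<eta> \<omega> \<inter> A1 \<Longrightarrow>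
          x \<in> hbox p w \<and> emeasure lborel (hbox a s - {y. \<delta> < g m y}) \<le> ennreal b"
        using Cb by (auto simp: A1_def)
    qed (use fin card k1 s_pos s_le b0 ku be in \<open>auto simp: p_def w_def d_def\<close>)
  qed
  show ?thesis
  proof (intro exI[of _ \<rho>] conjI allI impI)
    show "1 < \<rho>" by (simp add: \<rho>_def add_pos_nonneg)
    fix \<beta> :: real assume be: "1 \<le> \<beta>"
    have "0 < ennreal c * emeasure P E"
      using c_pos E_pos by (simp add: ennreal_zero_less_mult_iff)
    also have "\<dots> = (\<integral>\<^sup>+\<omega>. ennreal c * indicator E \<omega> \<partial>P)"
      using E_sets by (simp add: nn_integral_cmult_indicator)
    also have "\<dots> \<le> (\<integral>\<^sup>+ \<omega>. emeasure lborel
         {y \<in> cubeQ \<beta>. shot_noise g (\<eta> \<omega> \<inter> (cubeQ \<rho> \<times> space mu)) y > u} \<partial>P)"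
      by (intro nn_integral_mono) (auto simp: indicator_def pw be)
    finally show "0 < (\<integral>\<^sup>+ \<omega>. emeasure lborel
         {y \<in> cubeQ \<beta>. shot_noise g (\<eta> \<omega> \<inter> (cubeQ \<rho> \<times> space mu)) y > u} \<partial>P)" .
  qed
qed

end
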